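(* The category of cubes $\widehat{\square}$ (the maximal category of cubes, containing all adjacency-preserving maps) is shell-complete.
   Context: $[0]=\{()\}$, $[n]=\{0,1\}^n$ ($n\ge1$) with the product order. A map $f:[m]\to[n]$ is adjacency-preserving if it is strictly increasing and for $x,y\in[m]$ at Hamming distance $1$, $f(x),f(y)$ are at Hamming distance $1$. $\widehat\square$ is the category with objects $[n]$, $n\ge0$, and all adjacency-preserving maps. For a category $\mathcal A$ of this kind (with objects $[n]$), an $\mathcal A$-set is a presheaf on $\mathcal A$, $\mathcal A[p]=\mathcal A(-,[p])$, $K_{\le1}$ is truncation to the full subcategory on $[0],[1]$, and $\mathrm{cosk}_1^{\mathcal A}$ is the right adjoint to this truncation. $\mathcal A$ is shell-complete if for every $p\ge2$ the canonical map $\mathcal A[p]\to\mathrm{cosk}_1^{\mathcal A}(\mathcal A[p]_{\le1})$ (adjoint to the identity of $\mathcal A[p]_{\le1}$) is an isomorphism. *)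

theory Defs
  imports "HOL-Library.FuncSet"
begin

text \<open>The object [n] is represented by the set of boolean lists of length n
  (so [0] = {[]}), with the componentwise (product) order, False < True.\<close>

definition cube :: "nat \<Rightarrow> bool list set" where
  "cube n = {xs. length xs = n}"

definition cle :: "bool list \<Rightarrow> bool list \<Rightarrow> bool" where
  "cle xs ys \<longleftrightarrow> length xs = length ys \<and> (\<forall>i<length xs. xs ! i \<le> ys ! i)"

definition cless :: "bool list \<Rightarrow> bool list \<Rightarrow> bool" where
  "cless xs ys \<longleftrightarrow> cle xs ys \<and> xs \<noteq> ys"

definition hdist :: "bool list \<Rightarrow> bool list \<Rightarrow> nat" where
  "hdist xs ys = card {i. i < length xs \<and> xs ! i \<noteq> ys ! i}"

definition adj_pres :: "nat \<Rightarrow> (bool list \<Rightarrow> bool list) \<Rightarrow> bool" where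
  "adj_pres m f \<longleftrightarrow>
     (\<forall>x\<in>cube m. \<forall>y\<in>cube m. cless x y \<longrightarrow> cless (f x) (f y)) \<and>
     (\<forall>x\<in>cube m. \<forall>y\<in>cube m. hdist x y = 1 \<longrightarrow> hdist (f x) (f y) = 1)"

definition cube_hom :: "nat \<Rightarrow> nat \<Rightarrow> (bool list \<Rightarrow> bool list) set" where
  "cube_hom m n = {f \<in> cube m \<rightarrow>\<^sub>E cube n. adj_pres m f}"

definition ccomp :: "nat \<Rightarrow> (bool list \<Rightarrow> bool list) \<Rightarrow> (bool list \<Rightarrow> bool list)
    \<Rightarrow> (bool list \<Rightarrow> bool list)" where
  "ccomp k g f = compose (cube k) g f"

type_synonym cmor = "bool list \<Rightarrow> bool list"

text \<open>A category \<A> of this kind is given by its hom-sets \<open>hom m n\<close> (objects [n], n \<ge> 0,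
  composition = composition of functions).

  A 1-truncated \<A>-set Y (presheaf on the full subcategory on [0],[1]) is given by
  sets \<open>Yset k\<close> (k \<le> 1) and actions \<open>Yact k l \<phi> : Yset l \<rightarrow> Yset k\<close> for \<open>\<phi> \<in> hom k l\<close>.

  The value of the 1-coskeleton at [n] is the set of morphisms of truncated presheaves
  \<open>\<A>[n]_{\<le>1} \<rightarrow> Y\<close>, i.e. families \<alpha>_k : hom k n \<rightarrow> Yset k (k \<le> 1) that are natural.\<close>
definition cosk1 :: "(nat \<Rightarrow> nat \<Rightarrow> cmor set) \<Rightarrow> (nat \<Rightarrow> 'a set)
    \<Rightarrow> (nat \<Rightarrow> nat \<Rightarrow> cmor \<Rightarrow> 'a \<Rightarrow> 'a) \<Rightarrow> nat \<Rightarrow> (nat \<Rightarrow> cmor \<Rightarrow> 'a) set" where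
  "cosk1 hom Yset Yact n =
     {\<alpha>. (\<forall>k\<le>1. \<alpha> k \<in> hom k n \<rightarrow>\<^sub>E Yset k) \<and>
          (\<forall>k>1. \<alpha> k = (\<lambda>_. undefined)) \<and>
          (\<forall>k\<le>1. \<forall>l\<le>1. \<forall>\<phi>\<in>hom k l. \<forall>u\<in>hom l n.
              \<alpha> k (ccomp k u \<phi>) = Yact k l \<phi> (\<alpha> l u))}"

definition rep_set :: "(nat \<Rightarrow> nat \<Rightarrow> cmor set) \<Rightarrow> nat \<Rightarrow> nat \<Rightarrow> cmor set" where
  "rep_set hom p k = hom k p"

definition rep_act :: "nat \<Rightarrow> nat \<Rightarrow> nat \<Rightarrow> cmor \<Rightarrow> cmor \<Rightarrow> cmor" where
  "rep_act p k l \<phi> v = ccomp k v \<phi>"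

text \<open>Component at [n] of the canonical map \<A>[p] \<rightarrow> cosk_1(\<A>[p]_{\<le>1}) (the unit of the
  truncation/coskeleton adjunction): f \<mapsto> (u \<mapsto> f \<circ> u) for u \<in> hom k n, k \<le> 1.\<close>
definition canon :: "(nat \<Rightarrow> nat \<Rightarrow> cmor set) \<Rightarrow> nat \<Rightarrow> cmor \<Rightarrow> (nat \<Rightarrow> cmor \<Rightarrow> cmor)" where
  "canon hom n f = (\<lambda>k. if k \<le> 1 then (\<lambda>u\<in>hom k n. ccomp k f u) else (\<lambda>_. undefined))"

text \<open>Shell-completeness: for every p \<ge> 2 the canonical map is an isomorphism of \<A>-sets,
  i.e. each of its components (at every object [n]) is a bijection.\<close>
definition shell_complete :: "(nat \<Rightarrow> nat \<Rightarrow> cmor set) \<Rightarrow> bool" where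
  "shell_complete hom \<longleftrightarrow>
     (\<forall>p\<ge>2. \<forall>n. bij_betw (canon hom n) (hom n p)
                   (cosk1 hom (rep_set hom p) (rep_act p) n))"

end

theory Submission
  imports Defs
begin

lemma cube0: "cube 0 = {[]}" by (auto simp: cube_def)

lemma cube1: "cube (Suc 0) = {[False],[True]}"
  by (auto simp: cube_def length_Suc_conv)

lemma adj_pres0: "adj_pres 0 f"
  by (auto simp: adj_pres_def cube0 cless_def hdist_def)

lemma pt_hom: "x \<in> cube n \<Longrightarrow> (\<lambda>w\<in>cube 0. x) \<in> cube_hom 0 n"
  by (auto simp: cube_hom_def adj_pres0 cube0)

lemma comp_hom:
  assumes u: "u \<in> cube_hom k n" and f: "f \<in> cube_hom n p"
  shows "ccomp k f u \<in> cube_hom k p"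
proof -
  have u1: "u \<in> cube k \<rightarrow>\<^sub>E cube n" and u2: "adj_pres k u"
    using u by (auto simp: cube_hom_def)
  have f1: "f \<in> cube n \<rightarrow>\<^sub>E cube p" and f2: "adj_pres n f"
    using f by (auto simp: cube_hom_def)
  have "ccomp k f u \<in> cube k \<rightarrow>\<^sub>E cube p"
    using u1 f1 by (auto simp: ccomp_def compose_def)
  moreover have "adj_pres k (ccomp k f u)"
    using u1 f1 u2 f2 unfolding adj_pres_def ccomp_def compose_def
    by (auto simp: PiE_iff)
  ultimately show ?thesis by (simp add: cube_hom_def)
qed

lemma hdist_sym: "length x = length y \<Longrightarrow> hdist x y = hdist y x"
  unfolding hdist_def by (metis (no_types, lifting))

lemma cle_trans: "cle x y \<Longrightarrow> cle y z \<Longrightarrow> cle x z"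
  unfolding cle_def by (metis order_trans)

lemma cle_antisym: "cle x y \<Longrightarrow> cle y x \<Longrightarrow> x = y"
  unfolding cle_def by (metis antisym nth_equalityI)

lemma cle_refl: "cle x x" by (simp add: cle_def)

lemma step:
  assumes "cle x y" "x \<noteq> y"
  shows "\<exists>z. cless x z \<and> hdist x z = 1 \<and> cle z y \<and> hdist z y < hdist x y \<and> length z = length x"
proof -
  have len: "length x = length y" using assms by (simp add: cle_def)
  obtain i where i: "i < length x" "x ! i \<noteq> y ! i"
    using assms len nth_equalityI by blast
  have xi: "x ! i = False" "y ! i = True"
    using i assms(1) unfolding cle_def by auto
  define z where "z = x[i := True]"
  have lz: "length z = length x" by (simp add: z_def)
  have s1: "{j. j < length x \<and> x ! j \<noteq> z ! j} = {i}"
    using i xi by (auto simp: z_def nth_list_update)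
  have s2: "{j. j < length z \<and> z ! j \<noteq> y ! j} = {j. j < length x \<and> x ! j \<noteq> y ! j} - {i}"
    using i xi by (auto simp: z_def nth_list_update)
  have "{j. j < length x \<and> x ! j \<noteq> y ! j} - {i} \<subset> {j. j < length x \<and> x ! j \<noteq> y ! j}"
    using i by auto
  hence "hdist z y < hdist x y"
    unfolding hdist_def s2 by (intro psubset_card_mono) auto
  moreover have "hdist x z = 1" unfolding hdist_def s1 by simp
  moreover have "cle x z" using lz i unfolding cle_def z_def by (auto simp: nth_list_update)
  moreover have "x \<noteq> z" using xi i by (metis nth_list_update_eq z_def)
  moreover have "cle z y" unfolding cle_def
  proof (intro conjI allI impI)
    fix j assume "j < length z"
    thus "z ! j \<le> y ! j" using assms(1) xi len lz unfolding cle_def z_def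
      by (cases "j = i") auto
  qed (use lz len in simp)
  ultimately show ?thesis using lz by (auto simp: cless_def)
qed

lemma edge:
  assumes "length x = length y" "hdist x y = 1"
  shows "cless x y \<or> cless y x"
proof -
  obtain i where S: "{j. j < length x \<and> x ! j \<noteq> y ! j} = {i}"
    using assms(2) unfolding hdist_def by (meson card_1_singletonE)
  hence i: "i < length x" "x ! i \<noteq> y ! i" by auto
  have eq: "\<And>j. j < length x \<Longrightarrow> j \<noteq> i \<Longrightarrow> x ! j = y ! j" using S by auto
  have ne: "x \<noteq> y" using i by auto
  show ?thesis
  proof (cases "x ! i")
    case True
    have "cle y x" unfolding cle_def
    proof (intro conjI allI impI)
      fix j assume "j < length y"
      thus "y ! j \<le> x ! j" using True assms(1) eq[of j] by (cases "j = i") auto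
    qed (use assms(1) in simp)
    thus ?thesis using ne by (auto simp: cless_def)
  next
    case False
    have "cle x y" unfolding cle_def
    proof (intro conjI allI impI)
      fix j assume "j < length x"
      thus "x ! j \<le> y ! j" using False i eq[of j] by (cases "j = i") auto
    qed (use assms(1) in simp)
    thus ?thesis using ne by (auto simp: cless_def)
  qed
qed

lemma cosk1_iff:
  "\<alpha> \<in> cosk1 cube_hom (rep_set cube_hom p) (rep_act p) n \<longleftrightarrow>
     (\<forall>k\<le>1. \<alpha> k \<in> cube_hom k n \<rightarrow>\<^sub>E cube_hom k p) \<and>
     (\<forall>k>1. \<alpha> k = (\<lambda>_. undefined)) \<and>
     (\<forall>k\<le>1. \<forall>l\<le>1. \<forall>\<phi>\<in>cube_hom k l. \<forall>u\<in>cube_hom l n.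
        \<alpha> k (ccomp k u \<phi>) = ccomp k (\<alpha> l u) \<phi>)"
  by (simp add: cosk1_def rep_set_def rep_act_def)

lemma canon_in:
  assumes f: "f \<in> cube_hom n p"
  shows "canon cube_hom n f \<in> cosk1 cube_hom (rep_set cube_hom p) (rep_act p) n"
  unfolding cosk1_iff
proof (intro conjI allI impI ballI)
  fix k :: nat assume "k \<le> 1"
  thus "canon cube_hom n f k \<in> cube_hom k n \<rightarrow>\<^sub>E cube_hom k p"
    using comp_hom[OF _ f] by (auto simp: canon_def)
next
  fix k :: nat assume "1 < k"
  thus "canon cube_hom n f k = (\<lambda>_. undefined)" by (simp add: canon_def)
next
  fix k l :: nat and \<phi> u
  assume kl: "k \<le> 1" "l \<le> 1" and \<phi>: "\<phi> \<in> cube_hom k l" and u: "u \<in> cube_hom l n"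
  have c: "ccomp k u \<phi> \<in> cube_hom k n" by (rule comp_hom[OF \<phi> u])
  have pl: "\<And>z. z \<in> cube k \<Longrightarrow> \<phi> z \<in> cube l" using \<phi> by (auto simp: cube_hom_def)
  show "canon cube_hom n f k (ccomp k u \<phi>) = ccomp k (canon cube_hom n f l u) \<phi>"
    using kl c u pl by (auto simp: canon_def ccomp_def compose_def)
qed

lemma canon_inj: "inj_on (canon cube_hom n) (cube_hom n p)"
proof (rule inj_onI)
  fix f g assume f: "f \<in> cube_hom n p" and g: "g \<in> cube_hom n p"
    and eq: "canon cube_hom n f = canon cube_hom n g"
  show "f = g"
  proof (rule extensionalityI)
    show "f \<in> extensional (cube n)" "g \<in> extensional (cube n)"
      using f g by (auto simp: cube_hom_def PiE_def)
  next
    fix x assume x: "x \<in> cube n"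
    have "canon cube_hom n f 0 (\<lambda>w\<in>cube 0. x) [] = canon cube_hom n g 0 (\<lambda>w\<in>cube 0. x) []"
      using eq by simp
    thus "f x = g x" using pt_hom[OF x] by (simp add: canon_def ccomp_def compose_def cube0)
  qed
qed

lemma canon_surj:
  assumes a: "\<alpha> \<in> cosk1 cube_hom (rep_set cube_hom p) (rep_act p) n"
  shows "\<exists>f\<in>cube_hom n p. canon cube_hom n f = \<alpha>"
proof -
  have A1: "\<And>k. k \<le> 1 \<Longrightarrow> \<alpha> k \<in> cube_hom k n \<rightarrow>\<^sub>E cube_hom k p"
    and A2: "\<And>k. 1 < k \<Longrightarrow> \<alpha> k = (\<lambda>_. undefined)"
    and A3: "\<And>k l \<phi> u. k \<le> 1 \<Longrightarrow> l \<le> 1 \<Longrightarrow> \<phi> \<in> cube_hom k l \<Longrightarrow> u \<in> cube_hom l n \<Longrightarrow>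
        \<alpha> k (ccomp k u \<phi>) = ccomp k (\<alpha> l u) \<phi>"
    using a unfolding cosk1_iff by auto
  define g where "g = (\<lambda>x\<in>cube n. \<alpha> 0 (\<lambda>w\<in>cube 0. x) [])"
  have gval: "g x \<in> cube p" if x: "x \<in> cube n" for x
  proof -
    have "\<alpha> 0 (\<lambda>w\<in>cube 0. x) \<in> cube_hom 0 p" using A1[of 0] pt_hom[OF x] by auto
    thus ?thesis using x by (auto simp: g_def cube_hom_def cube0)
  qed
  have key: "g (u z) = \<alpha> k u z" if k: "k \<le> 1" and u: "u \<in> cube_hom k n" and z: "z \<in> cube k"
    for k u z
  proof -
    have uz: "u z \<in> cube n" using u z by (auto simp: cube_hom_def)
    have \<phi>: "(\<lambda>w\<in>cube 0. z) \<in> cube_hom 0 k" by (rule pt_hom[OF z])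
    have "\<alpha> 0 (ccomp 0 u (\<lambda>w\<in>cube 0. z)) = ccomp 0 (\<alpha> k u) (\<lambda>w\<in>cube 0. z)"
      using A3[OF _ k \<phi> u] by simp
    moreover have "ccomp 0 u (\<lambda>w\<in>cube 0. z) = (\<lambda>w\<in>cube 0. u z)"
      by (auto simp: ccomp_def compose_def cube0)
    ultimately have "\<alpha> 0 (\<lambda>w\<in>cube 0. u z) [] = \<alpha> k u z"
      by (simp add: ccomp_def compose_def cube0)
    thus ?thesis using uz by (simp add: g_def)
  qed
  have edgemap: "cless (g x) (g y) \<and> hdist (g x) (g y) = 1"
    if x: "x \<in> cube n" and y: "y \<in> cube n" and xy: "cless x y" and h: "hdist x y = 1" for x y
  proof -
    define e where "e = (\<lambda>z\<in>cube (Suc 0). if z = [True] then y else x)"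
    have lxy: "length x = length y" using x y by (simp add: cube_def)
    have hyx: "hdist y x = 1" using h hdist_sym[OF lxy] by simp
    have nyx: "\<not> cless y x" using xy cle_antisym unfolding cless_def by blast
    have tf: "\<not> cle [True] [False]" by (simp add: cle_def)
    have e: "e \<in> cube_hom 1 n"
      using tf unfolding cube_hom_def adj_pres_def
      using x y xy h hyx nyx by (auto simp: e_def cube1 cless_def hdist_def)
    have ae: "\<alpha> 1 e \<in> cube_hom 1 p" using A1[of 1] e by auto
    hence ap: "adj_pres 1 (\<alpha> 1 e)" by (simp add: cube_hom_def)
    have c1: "[False] \<in> cube 1" "[True] \<in> cube 1" by (auto simp: cube_def)
    have cl: "cless [False] [True]" by (simp add: cless_def cle_def)
    have "{i. i < length [False] \<and> [False] ! i \<noteq> [True] ! i} = {0}" by auto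
    hence hh: "hdist [False] [True] = 1" by (simp add: hdist_def)
    have "cless (\<alpha> 1 e [False]) (\<alpha> 1 e [True]) \<and> hdist (\<alpha> 1 e [False]) (\<alpha> 1 e [True]) = 1"
      using ap c1 cl hh unfolding adj_pres_def by blast
    moreover have "g x = \<alpha> 1 e [False]" using key[of 1 e "[False]"] e by (simp add: cube1 e_def)
    moreover have "g y = \<alpha> 1 e [True]" using key[of 1 e "[True]"] e by (simp add: cube1 e_def)
    ultimately show ?thesis by simp
  qed
  have mono: "\<And>x y. x \<in> cube n \<Longrightarrow> y \<in> cube n \<Longrightarrow> cle x y \<Longrightarrow> cle (g x) (g y)"
  proof -
    fix x y
    show "x \<in> cube n \<Longrightarrow> y \<in> cube n \<Longrightarrow> cle x y \<Longrightarrow> cle (g x) (g y)"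
    proof (induction "hdist x y" arbitrary: x rule: less_induct)
      case less
      show ?case
      proof (cases "x = y")
        case True thus ?thesis by (simp add: cle_refl)
      next
        case False
        then obtain z where z: "cless x z" "hdist x z = 1" "cle z y" "hdist z y < hdist x y"
            "length z = length x" using step[OF less.prems(3)] by blast
        have zc: "z \<in> cube n" using z(5) less.prems by (simp add: cube_def)
        have "cle (g z) (g y)" using less.hyps[OF z(4) zc less.prems(2) z(3)] .
        moreover have "cle (g x) (g z)" using edgemap[OF less.prems(1) zc z(1,2)]
          by (simp add: cless_def)
        ultimately show ?thesis using cle_trans by blast
      qed
    qed
  qed
  have strict: "cless (g x) (g y)" if x: "x \<in> cube n" and y: "y \<in> cube n" and xy: "cless x y" for x y
  proof -
    obtain z where z: "cless x z" "hdist x z = 1" "cle z y" "length z = length x"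
      using step xy unfolding cless_def by blast
    have zc: "z \<in> cube n" using z(4) x by (simp add: cube_def)
    have 1: "cless (g x) (g z)" using edgemap[OF x zc z(1,2)] by simp
    have 2: "cle (g z) (g y)" using mono[OF zc y z(3)] .
    have "g x \<noteq> g y"
    proof
      assume "g x = g y"
      hence "cle (g z) (g x)" using 2 by simp
      thus False using 1 cle_antisym unfolding cless_def by blast
    qed
    thus ?thesis using 1 2 cle_trans unfolding cless_def by blast
  qed
  have hd: "hdist (g x) (g y) = 1" if x: "x \<in> cube n" and y: "y \<in> cube n" and h: "hdist x y = 1" for x y
  proof -
    have lxy: "length x = length y" using x y by (simp add: cube_def)
    have lg: "length (g x) = length (g y)" using gval[OF x] gval[OF y] by (simp add: cube_def)
    from edge[OF lxy h] show ?thesis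
    proof
      assume "cless x y" thus ?thesis using edgemap[OF x y _ h] by simp
    next
      assume "cless y x" thus ?thesis using edgemap[OF y x] h hdist_sym[OF lxy] hdist_sym[OF lg]
        by simp
    qed
  qed
  have ge: "g \<in> extensional (cube n)" by (simp add: g_def)
  have gh: "g \<in> cube_hom n p"
    unfolding cube_hom_def adj_pres_def using gval strict hd ge by (simp add: PiE_def Pi_def)
  have "canon cube_hom n g = \<alpha>"
  proof (rule ext)
    fix k
    show "canon cube_hom n g k = \<alpha> k"
    proof (cases "k \<le> 1")
      case False thus ?thesis using A2 by (simp add: canon_def)
    next
      case True
      show ?thesis
      proof (rule ext)
        fix u
        show "canon cube_hom n g k u = \<alpha> k u"
        proof (cases "u \<in> cube_hom k n")
          case False
          have "\<alpha> k \<in> extensional (cube_hom k n)" using A1[OF True] by (simp add: PiE_def)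
          thus ?thesis using True False by (simp add: canon_def extensional_def)
        next
          case u: True
          have au: "\<alpha> k u \<in> cube_hom k p" using A1[OF True] u by auto
          show ?thesis
          proof (rule ext)
            fix z
            have ex: "\<alpha> k u \<in> extensional (cube k)" using au by (simp add: cube_hom_def PiE_def)
            have "canon cube_hom n g k u = ccomp k g u" using True u by (simp add: canon_def)
            thus "canon cube_hom n g k u z = \<alpha> k u z"
              using key[OF True u, of z] ex
              by (cases "z \<in> cube k") (simp_all add: ccomp_def compose_def extensional_def)
          qed
        qed
      qed
    qed
  qed
  thus ?thesis using gh by blast
qed

theorem theorem7p5:
  shows "shell_complete cube_hom"
  unfolding shell_complete_def
proof (intro allI impI)
  fix p n :: nat
  show "bij_betw (canon cube_hom n) (cube_hom n p) (cosk1 cube_hom (rep_set cube_hom p) (rep_act p) n)"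
    unfolding bij_betw_def
    using canon_inj canon_in canon_surj by blast
qed

end
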